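(* Let $G=(m,n,\boldsymbol{c},\boldsymbol{d},r_{\max},r_{\min})$ be an interbank lending game, let $\alpha\in(0,1]$, and let $\boldsymbol{s}^1\in\boldsymbol{S}$ be any initial strategy profile. Then the randomised $\alpha$-uniform best-response dynamics $(\boldsymbol{s}^t)_{t\in\mathbb{N}}$ started at $\boldsymbol{s}^1$ converges almost surely to the unique pure Nash equilibrium $\boldsymbol{s}^*$ of $G$.
   Context: An interbank lending game $G=(m,n,\boldsymbol{c},\boldsymbol{d},r_{\max},r_{\min})$ consists of positive integers $m,n$, budgets $\boldsymbol{c}\in\mathbb{R}_{>0}^m$, demands $\boldsymbol{d}\in\mathbb{R}_{>0}^n$ and reals $0<r_{\min}<r_{\max}$. The players are the lenders $L=\{1,\dots,m\}$; $B=\{1,\dots,n\}$ is the set of borrowers. Lender $i$'s strategy set is $S_i=\{s_i\in\mathbb{R}_{\ge0}^n:\sum_{j\in B}s_{ij}\le c_i\}$, the strategy space is $\boldsymbol{S}=\prod_{i\in L}S_i$ with elements $\boldsymbol{s}=(s_{ij})$. The interest rate of borrower $j$ is $r_j(\boldsymbol{s})=(r_{\min}-r_{\max})\frac{\sum_{i\in L}s_{ij}}{d_j}+r_{\max}$ and lender $i$'s utility is $u_i(\boldsymbol{s})=\sum_{j\in B}(r_j(\boldsymbol{s})-r_{\min})s_{ij}$. A pure Nash equilibrium is $\boldsymbol{s}^*\in\boldsymbol{S}$ with $u_i(\boldsymbol{s}^* )\ge u_i(s_i,\boldsymbol{s}^*_{-i})$ for all $i\in L$, $s_i\in S_i$;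 $G$ has exactly one. For $\boldsymbol{s}\in\boldsymbol{S}$, lender $i$'s best-response set is $\mathrm{BR}_i(\boldsymbol{s})=\arg\max\{u_i(z_i,\boldsymbol{s}_{-i}):z_i\in S_i\}$. In the randomised $\alpha$-uniform best-response dynamics, at each time step $t$ the updating lender $i^t\in L$ is drawn at random according to a given probability distribution $\pi^t$ on $L$ (independently of the earlier draws), where there is a constant $p_{\min}>0$ with $\pi^t(i)\ge p_{\min}$ for all $t$ and all $i\in L$; then $\boldsymbol{s}^{t+1}=(s^{t+1}_{i^t},\boldsymbol{s}^t_{-i^t})$ with $s^{t+1}_{i^t}=s^t_{i^t}+\alpha(\hat s^t_{i^t}-s^t_{i^t})$ for some $\hat s^t_{i^t}\in\mathrm{BR}_{i^t}(\boldsymbol{s}^t)$. Convergence means $\boldsymbol{s}^t\to\boldsymbol{s}^*$ as $t\to\infty$. *)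

theory Defs
  imports "HOL-Probability.Probability"
begin

text \<open>Lenders are indexed by 0..<m, borrowers by 0..<n.
  A strategy profile is a function s :: nat => nat => real, where s i j is the
  amount lender i lends to borrower j; entries outside the index box are 0.\<close>

definition lending_game :: "nat \<Rightarrow> nat \<Rightarrow> (nat \<Rightarrow> real) \<Rightarrow> (nat \<Rightarrow> real) \<Rightarrow> real \<Rightarrow> real \<Rightarrow> bool" where
  "lending_game m n c d rmax rmin \<longleftrightarrow>
     0 < m \<and> 0 < n \<and> (\<forall>i<m. 0 < c i) \<and> (\<forall>j<n. 0 < d j) \<and> 0 < rmin \<and> rmin < rmax"

definition strat_set :: "nat \<Rightarrow> (nat \<Rightarrow> real) \<Rightarrow> nat \<Rightarrow> (nat \<Rightarrow> real) set" where
  "strat_set n c i = {z. (\<forall>j. n \<le> j \<longrightarrow> z j = 0) \<and> (\<forall>j<n. 0 \<le> z j) \<and> (\<Sum>j<n. z j) \<le> c i}"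

definition profiles :: "nat \<Rightarrow> nat \<Rightarrow> (nat \<Rightarrow> real) \<Rightarrow> (nat \<Rightarrow> nat \<Rightarrow> real) set" where
  "profiles m n c = {s. (\<forall>i. m \<le> i \<longrightarrow> s i = (\<lambda>_. 0)) \<and> (\<forall>i<m. s i \<in> strat_set n c i)}"

definition rate :: "nat \<Rightarrow> (nat \<Rightarrow> real) \<Rightarrow> real \<Rightarrow> real \<Rightarrow> (nat \<Rightarrow> nat \<Rightarrow> real) \<Rightarrow> nat \<Rightarrow> real" where
  "rate m d rmax rmin s j = (rmin - rmax) * (\<Sum>i<m. s i j) / d j + rmax"

definition utility :: "nat \<Rightarrow> nat \<Rightarrow> (nat \<Rightarrow> real) \<Rightarrow> real \<Rightarrow> real \<Rightarrow> nat \<Rightarrow> (nat \<Rightarrow> nat \<Rightarrow> real) \<Rightarrow> real" where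
  "utility m n d rmax rmin i s = (\<Sum>j<n. (rate m d rmax rmin s j - rmin) * s i j)"

definition is_pure_NE :: "nat \<Rightarrow> nat \<Rightarrow> (nat \<Rightarrow> real) \<Rightarrow> (nat \<Rightarrow> real) \<Rightarrow> real \<Rightarrow> real \<Rightarrow> (nat \<Rightarrow> nat \<Rightarrow> real) \<Rightarrow> bool" where
  "is_pure_NE m n c d rmax rmin s \<longleftrightarrow>
     s \<in> profiles m n c \<and>
     (\<forall>i<m. \<forall>z\<in>strat_set n c i. utility m n d rmax rmin i (s(i := z)) \<le> utility m n d rmax rmin i s)"

definition best_responses :: "nat \<Rightarrow> nat \<Rightarrow> (nat \<Rightarrow> real) \<Rightarrow> (nat \<Rightarrow> real) \<Rightarrow> real \<Rightarrow> real \<Rightarrow> nat \<Rightarrow> (nat \<Rightarrow> nat \<Rightarrow> real) \<Rightarrow> (nat \<Rightarrow> real) set" where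
  "best_responses m n c d rmax rmin i s =
     {z \<in> strat_set n c i. \<forall>z'\<in>strat_set n c i.
        utility m n d rmax rmin i (s(i := z')) \<le> utility m n d rmax rmin i (s(i := z))}"

text \<open>alpha-uniform best-response dynamics driven by a sequence of updating lenders
  \<omega> t (the lender updating at step t) and a best-response selection rule sel:
  sel t s i is the chosen element of BR_i(s) at time t. Time starts at 0
  (s^0 here corresponds to s^1 in the paper).\<close>
fun br_dynamics :: "real \<Rightarrow> (nat \<Rightarrow> (nat \<Rightarrow> nat \<Rightarrow> real) \<Rightarrow> nat \<Rightarrow> nat \<Rightarrow> real)
    \<Rightarrow> (nat \<Rightarrow> nat \<Rightarrow> real) \<Rightarrow> (nat \<Rightarrow> nat) \<Rightarrow> nat \<Rightarrow> nat \<Rightarrow> nat \<Rightarrow> real" where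
  "br_dynamics \<alpha> sel s1 \<omega> 0 = s1"
| "br_dynamics \<alpha> sel s1 \<omega> (Suc t) =
     (let s = br_dynamics \<alpha> sel s1 \<omega> t; i = \<omega> t
      in s(i := (\<lambda>j. s i j + \<alpha> * (sel t s i j - s i j))))"

end

theory Submission
  imports Defs
begin


locale lg =
  fixes m n :: nat and c d :: "nat \<Rightarrow> real" and rmax rmin :: real
  assumes G: "lending_game m n c d rmax rmin"
begin

lemma d_pos: "j < n \<Longrightarrow> 0 < d j" and c_pos: "i < m \<Longrightarrow> 0 < c i"
  and K_pos: "rmin < rmax" and m_pos: "0 < m" and n_pos: "0 < n"
  using G by (auto simp: lending_game_def)

definition cs :: "(nat\<Rightarrow>nat\<Rightarrow>real) \<Rightarrow> nat \<Rightarrow> real" where "cs x j = (\<Sum>i<m. x i j)"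
definition pot :: "(nat\<Rightarrow>nat\<Rightarrow>real) \<Rightarrow> real" where
  "pot x = (\<Sum>j<n. cs x j - ((cs x j)^2 + (\<Sum>i<m. (x i j)^2)) / (2 * d j))"
definition gr :: "(nat\<Rightarrow>nat\<Rightarrow>real) \<Rightarrow> nat \<Rightarrow> nat \<Rightarrow> real" where
  "gr x i j = 1 - (cs x j + x i j) / d j"
definition ip :: "(nat\<Rightarrow>nat\<Rightarrow>real) \<Rightarrow> (nat\<Rightarrow>nat\<Rightarrow>real) \<Rightarrow> real" where
  "ip a b = (\<Sum>i<m. \<Sum>j<n. a i j * b i j)"
definition Qf :: "(nat\<Rightarrow>nat\<Rightarrow>real) \<Rightarrow> real" where
  "Qf h = (\<Sum>j<n. ((cs h j)^2 + (\<Sum>i<m. (h i j)^2)) / (2 * d j))"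
definition padd :: "(nat\<Rightarrow>nat\<Rightarrow>real) \<Rightarrow> (nat\<Rightarrow>nat\<Rightarrow>real) \<Rightarrow> (nat\<Rightarrow>nat\<Rightarrow>real)" where
  "padd x h = (\<lambda>i j. x i j + h i j)"
definition psc :: "real \<Rightarrow> (nat\<Rightarrow>nat\<Rightarrow>real) \<Rightarrow> (nat\<Rightarrow>nat\<Rightarrow>real)" where
  "psc a h = (\<lambda>i j. a * h i j)"

lemma ip_gr_j: "ip (gr x) h = (\<Sum>j<n. cs h j - (cs x j * cs h j + (\<Sum>i<m. x i j * h i j)) / d j)"
proof -
  have "ip (gr x) h = (\<Sum>j<n. \<Sum>i<m. gr x i j * h i j)"
    unfolding ip_def by (rule sum.swap)
  also have "\<dots> = (\<Sum>j<n. cs h j - (cs x j * cs h j + (\<Sum>i<m. x i j * h i j)) / d j)"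
  proof (rule sum.cong[OF refl])
    fix j
    have "(\<Sum>i<m. gr x i j * h i j) = (\<Sum>i<m. h i j - (cs x j * h i j + x i j * h i j) / d j)"
      by (rule sum.cong) (auto simp: gr_def field_simps)
    also have "\<dots> = cs h j - (cs x j * cs h j + (\<Sum>i<m. x i j * h i j)) / d j"
      by (simp add: cs_def sum_subtractf sum_divide_distrib[symmetric] sum.distrib sum_distrib_left)
    finally show "(\<Sum>i<m. gr x i j * h i j) = cs h j - (cs x j * cs h j + (\<Sum>i<m. x i j * h i j)) / d j" .
  qed
  finally show ?thesis .
qed

lemma taylor: "pot (padd x h) = pot x + ip (gr x) h - Qf h"
proof -
  have cs_add: "cs (padd x h) j = cs x j + cs h j" for j
    by (simp add: cs_def padd_def sum.distrib)
  have sq_add: "(\<Sum>i<m. (padd x h i j)^2) = (\<Sum>i<m. (x i j)^2) + 2 * (\<Sum>i<m. x i j * h i j) + (\<Sum>i<m. (h i j)^2)" for j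
    by (simp add: padd_def power2_eq_square algebra_simps sum.distrib sum_distrib_left)
  have "pot x + ip (gr x) h - Qf h = (\<Sum>j<n. (cs x j - ((cs x j)^2 + (\<Sum>i<m. (x i j)^2)) / (2 * d j))
      + (cs h j - (cs x j * cs h j + (\<Sum>i<m. x i j * h i j)) / d j)
      - ((cs h j)^2 + (\<Sum>i<m. (h i j)^2)) / (2 * d j))"
    unfolding pot_def ip_gr_j Qf_def by (simp add: sum.distrib sum_subtractf)
  also have "\<dots> = pot (padd x h)"
    unfolding pot_def
  proof (rule sum.cong[OF refl])
    fix j assume "j \<in> {..<n}"
    then have "d j \<noteq> 0" using d_pos by force
    then show "(cs x j - ((cs x j)^2 + (\<Sum>i<m. (x i j)^2)) / (2 * d j))
      + (cs h j - (cs x j * cs h j + (\<Sum>i<m. x i j * h i j)) / d j)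
      - ((cs h j)^2 + (\<Sum>i<m. (h i j)^2)) / (2 * d j)
      = cs (padd x h) j - ((cs (padd x h) j)^2 + (\<Sum>i<m. (padd x h i j)^2)) / (2 * d j)"
      unfolding cs_add sq_add by (simp add: field_simps power2_eq_square)
  qed
  finally show ?thesis by simp
qed

lemma Qf_scale: "Qf (psc a h) = a^2 * Qf h"
  by (simp add: Qf_def psc_def cs_def power_mult_distrib sum_distrib_left[symmetric]
      sum_divide_distrib[symmetric] power2_eq_square algebra_simps)
   (simp add: sum_distrib_left sum_divide_distrib algebra_simps)

lemma ip_scale: "ip g (psc a h) = a * ip g h"
  by (simp add: ip_def psc_def sum_distrib_left algebra_simps)

lemma Qf_nonneg: "0 \<le> Qf h"
  unfolding Qf_def using d_pos by (intro sum_nonneg divide_nonneg_pos add_nonneg_nonneg sum_nonneg) auto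

lemma Qf_entry: "(\<Sum>j<n. (\<Sum>i<m. (h i j)^2) / (2 * d j)) \<le> Qf h"
  unfolding Qf_def using d_pos by (intro sum_mono divide_right_mono) (auto intro: less_imp_le)


definition rowv :: "nat \<Rightarrow> (nat \<Rightarrow> real) \<Rightarrow> (nat\<Rightarrow>nat\<Rightarrow>real)" where
  "rowv i f = (\<lambda>a j. if a = i then f j else 0)"

lemma upd_eq: "y(i := z) = padd y (rowv i (\<lambda>j. z j - y i j))"
  by (rule ext)+ (simp add: padd_def rowv_def)

lemma ip_row: "i < m \<Longrightarrow> ip g (rowv i f) = (\<Sum>j<n. g i j * f j)"
proof -
  assume i: "i < m"
  have "ip g (rowv i f) = (\<Sum>a<m. if a = i then (\<Sum>j<n. g i j * f j) else 0)"
    unfolding ip_def rowv_def by (rule sum.cong) auto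
  also have "\<dots> = (\<Sum>j<n. g i j * f j)" using i by simp
  finally show ?thesis .
qed

lemma cs_upd: "i < m \<Longrightarrow> cs (y(i := z)) j = cs y j - y i j + z j"
proof -
  assume i: "i < m"
  have "cs (y(i := z)) j = (\<Sum>k<m. y k j + (if k = i then z j - y i j else 0))"
    unfolding cs_def by (rule sum.cong) auto
  then show ?thesis using i by (simp add: sum.distrib cs_def)
qed

lemma sq_upd: "i < m \<Longrightarrow> (\<Sum>k<m. (((y::nat\<Rightarrow>nat\<Rightarrow>real)(i := z)) k j)^2) = (\<Sum>k<m. (y k j)^2) - (y i j)^2 + (z j)^2"
proof -
  assume i: "i < m"
  have "(\<Sum>k<m. ((y(i := z)) k j)^2) = (\<Sum>k<m. (y k j)^2 + (if k = i then (z j)^2 - (y i j)^2 else 0))"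
    by (rule sum.cong) (simp_all add: fun_upd_def)
  then show ?thesis using i by (simp add: sum.distrib algebra_simps)
qed

lemma util_pot: assumes i: "i < m"
  shows "utility m n d rmax rmin i (y(i := z)) - utility m n d rmax rmin i y
     = (rmax - rmin) * (pot (y(i := z)) - pot y)"
proof -
  have rate: "rate m d rmax rmin s j = (rmin - rmax) * cs s j / d j + rmax" for s j
    by (simp add: rate_def cs_def)
  have "utility m n d rmax rmin i (y(i := z)) - utility m n d rmax rmin i y
     = (\<Sum>j<n. ((rmin - rmax) * (cs y j - y i j + z j) / d j + rmax - rmin) * z j
              - ((rmin - rmax) * cs y j / d j + rmax - rmin) * y i j)"
    unfolding utility_def rate cs_upd[OF i] by (simp add: sum_subtractf)
  also have "\<dots> = (rmax - rmin) * (\<Sum>j<n. ((cs y j - y i j + z j) - ((cs y j - y i j + z j)^2 + ((\<Sum>k<m. (y k j)^2) - (y i j)^2 + (z j)^2)) / (2 * d j))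
         - (cs y j - ((cs y j)^2 + (\<Sum>k<m. (y k j)^2)) / (2 * d j)))"
    unfolding sum_distrib_left
  proof (rule sum.cong[OF refl])
    fix j assume "j \<in> {..<n}"
    then have "d j \<noteq> 0" using d_pos by force
    then show "((rmin - rmax) * (cs y j - y i j + z j) / d j + rmax - rmin) * z j
              - ((rmin - rmax) * cs y j / d j + rmax - rmin) * y i j =
      (rmax - rmin) * ((cs y j - y i j + z j) - ((cs y j - y i j + z j)^2 + ((\<Sum>k<m. (y k j)^2) - (y i j)^2 + (z j)^2)) / (2 * d j)
         - (cs y j - ((cs y j)^2 + (\<Sum>k<m. (y k j)^2)) / (2 * d j)))"
      by (simp add: field_simps power2_eq_square)
  qed
  also have "\<dots> = (rmax - rmin) * (pot (y(i := z)) - pot y)"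
    unfolding pot_def cs_upd[OF i] sq_upd[OF i] by (simp only: sum_subtractf)
  finally show ?thesis .
qed

lemma strat_convex:
  assumes "z \<in> strat_set n c i" "w \<in> strat_set n c i" "0 \<le> l" "l \<le> 1"
  shows "(\<lambda>j. w j + l * (z j - w j)) \<in> strat_set n c i"
proof -
  have nn: "0 \<le> w j + l * (z j - w j)" if "j < n" for j
  proof -
    have "0 \<le> z j" "0 \<le> w j" using assms that by (auto simp: strat_set_def)
    then have "0 \<le> (1 - l) * w j + l * z j" using assms by (intro add_nonneg_nonneg mult_nonneg_nonneg) auto
    then show ?thesis by (simp add: algebra_simps)
  qed
  have "(\<Sum>j<n. w j + l * (z j - w j)) = (1 - l) * (\<Sum>j<n. w j) + l * (\<Sum>j<n. z j)"
    by (simp add: sum.distrib sum_distrib_left algebra_simps sum_subtractf)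
  also have "\<dots> \<le> (1 - l) * c i + l * c i"
    using assms by (intro add_mono mult_left_mono) (auto simp: strat_set_def)
  finally show ?thesis using assms nn by (auto simp: strat_set_def algebra_simps)
qed

lemma small_pos: assumes "\<And>l::real. 0 < l \<Longrightarrow> l \<le> 1 \<Longrightarrow> a \<le> l * b" "0 \<le> b" shows "a \<le> 0"
proof (rule ccontr)
  assume "\<not> a \<le> 0" then have a: "a > 0" by simp
  show False
  proof (cases "a / (b + 1) \<le> 1")
    case True
    have "a \<le> a / (b + 1) * b" using assms(1)[of "a / (b+1)"] True a assms(2) by simp
    moreover have "a / (b + 1) * b < a" using a assms(2) by (simp add: field_simps)
    ultimately show False by simp
  next
    case False
    then have "a > b + 1" using assms(2) by (simp add: field_simps)
    then show False using assms(1)[of 1] by simp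
  qed
qed

lemma foc:
  assumes i: "i < m" and yi: "y i \<in> strat_set n c i"
    and mx: "\<And>z. z \<in> strat_set n c i \<Longrightarrow> pot (y(i := z)) \<le> pot y"
    and z: "z \<in> strat_set n c i"
  shows "(\<Sum>j<n. gr y i j * (z j - y i j)) \<le> 0"
proof (rule small_pos[OF _ Qf_nonneg])
  fix l :: real assume l: "0 < l" "l \<le> 1"
  let ?h = "rowv i (\<lambda>j. z j - y i j)"
  have "y(i := (\<lambda>j. y i j + l * (z j - y i j))) = padd y (psc l ?h)"
    by (rule ext)+ (simp add: padd_def psc_def rowv_def)
  moreover have "pot (y(i := (\<lambda>j. y i j + l * (z j - y i j)))) \<le> pot y"
    using mx strat_convex[OF z yi] l by simp
  ultimately have "pot y + l * ip (gr y) ?h - l^2 * Qf ?h \<le> pot y"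
    using taylor[of y "psc l ?h"] by (simp add: Qf_scale ip_scale)
  then have "l * (ip (gr y) ?h) \<le> l * (l * Qf ?h)" by (simp add: power2_eq_square algebra_simps)
  then have "ip (gr y) ?h \<le> l * Qf ?h" using l by simp
  then show "(\<Sum>j<n. gr y i j * (z j - y i j)) \<le> l * Qf ?h" using ip_row[OF i] by simp
qed

lemma br_foc:
  assumes i: "i < m" and w: "w \<in> best_responses m n c d rmax rmin i x"
  shows "w \<in> strat_set n c i" "\<And>z. z \<in> strat_set n c i \<Longrightarrow> (\<Sum>j<n. gr (x(i := w)) i j * (z j - w j)) \<le> 0"
proof -
  show ws: "w \<in> strat_set n c i" using w by (simp add: best_responses_def)
  fix z assume z: "z \<in> strat_set n c i"
  have "pot ((x(i := w))(i := z')) \<le> pot (x(i := w))" if z': "z' \<in> strat_set n c i" for z'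
  proof -
    have "utility m n d rmax rmin i (x(i := z')) \<le> utility m n d rmax rmin i (x(i := w))"
      using w z' by (simp add: best_responses_def)
    then have "(rmax - rmin) * (pot (x(i := z')) - pot x) \<le> (rmax - rmin) * (pot (x(i := w)) - pot x)"
      using util_pot[OF i, of x z'] util_pot[OF i, of x w] by simp
    then show ?thesis using K_pos by simp
  qed
  then show "(\<Sum>j<n. gr (x(i := w)) i j * (z j - w j)) \<le> 0"
    using foc[OF i, of "x(i := w)" z] ws z by simp
qed

lemma ne_foc:
  assumes NE: "is_pure_NE m n c d rmax rmin s" and i: "i < m" and z: "z \<in> strat_set n c i"
  shows "(\<Sum>j<n. gr s i j * (z j - s i j)) \<le> 0"
proof -
  have si: "s i \<in> strat_set n c i" using NE i by (simp add: is_pure_NE_def profiles_def)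
  have "pot (s(i := z')) \<le> pot s" if z': "z' \<in> strat_set n c i" for z'
  proof -
    have "utility m n d rmax rmin i (s(i := z')) \<le> utility m n d rmax rmin i s"
      using NE z' i by (simp add: is_pure_NE_def)
    then have "(rmax - rmin) * (pot (s(i := z')) - pot s) \<le> 0"
      using util_pot[OF i, of s z'] by simp
    then show ?thesis using K_pos by (simp add: mult_le_0_iff)
  qed
  then show ?thesis using foc[OF i, of s, OF si _ z] by blast
qed


lemma improve:
  assumes i: "i < m" and w: "w \<in> best_responses m n c d rmax rmin i x"
    and xi: "x i \<in> strat_set n c i" and a: "0 < a" "a \<le> 1"
  shows "pot x + a * Qf (rowv i (\<lambda>j. w j - x i j)) \<le> pot (padd x (psc a (rowv i (\<lambda>j. w j - x i j))))"
proof -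
  define h where "h = rowv i (\<lambda>j. w j - x i j)"
  have xw: "x(i := w) = padd x h" unfolding h_def by (rule upd_eq)
  have "(\<Sum>j<n. gr (x(i := w)) i j * (x i j - w j)) \<le> 0"
    using br_foc(2)[OF i w xi] .
  then have "(\<Sum>j<n. - (gr (padd x h) i j * (w j - x i j))) \<le> 0"
    unfolding xw by (simp add: algebra_simps)
  then have ip0: "0 \<le> ip (gr (padd x h)) h"
    unfolding h_def ip_row[OF i] by (simp add: sum_negf)
  have bk: "padd (padd x h) (psc (-1) h) = x" by (rule ext)+ (simp add: padd_def psc_def)
  have "pot x = pot (padd x h) + ip (gr (padd x h)) (psc (-1) h) - Qf (psc (-1) h)"
    using taylor[of "padd x h" "psc (-1) h"] unfolding bk .
  then have e1: "pot x = pot (padd x h) - ip (gr (padd x h)) h - Qf h"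
    by (simp add: ip_scale Qf_scale)
  have e2: "pot (padd x h) = pot x + ip (gr x) h - Qf h" by (rule taylor)
  have ipx: "2 * Qf h \<le> ip (gr x) h" using e1 e2 ip0 by linarith
  have "pot (padd x (psc a h)) = pot x + a * ip (gr x) h - a^2 * Qf h"
    using taylor[of x "psc a h"] by (simp add: ip_scale Qf_scale)
  moreover have "a * (2 * Qf h) \<le> a * ip (gr x) h" using ipx a by simp
  moreover have "a^2 * Qf h \<le> a * Qf h" using a Qf_nonneg[of h]
    by (intro mult_right_mono) (auto simp: power2_eq_square mult_le_cancel_left1)
  ultimately show ?thesis unfolding h_def[symmetric] by (simp add: algebra_simps)
qed

lemma entry_bounds:
  assumes x: "x \<in> profiles m n c" and i: "i < m" and j: "j < n"
  shows "0 \<le> x i j" "x i j \<le> c i"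
proof -
  have xi: "x i \<in> strat_set n c i" using x i by (simp add: profiles_def)
  then show "0 \<le> x i j" using j by (simp add: strat_set_def)
  have "x i j \<le> (\<Sum>j<n. x i j)" using xi j by (intro member_le_sum) (auto simp: strat_set_def)
  also have "\<dots> \<le> c i" using xi by (simp add: strat_set_def)
  finally show "x i j \<le> c i" .
qed

lemma pot_le_star:
  assumes NE: "is_pure_NE m n c d rmax rmin s" and x: "x \<in> profiles m n c"
  shows "pot x \<le> pot s - Qf (\<lambda>i j. x i j - s i j)"
proof -
  define D where "D = (\<lambda>i j. x i j - s i j)"
  have "x = padd s D" unfolding D_def padd_def by simp
  then have "pot x = pot s + ip (gr s) D - Qf D" using taylor by simp
  moreover have "ip (gr s) D \<le> 0"
    unfolding ip_def D_def
  proof (rule sum_nonpos)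
    fix i assume "i \<in> {..<m}"
    then show "(\<Sum>j<n. gr s i j * (x i j - s i j)) \<le> 0"
      using ne_foc[OF NE, of i "x i"] x by (simp add: profiles_def)
  qed
  ultimately show ?thesis unfolding D_def by simp
qed

lemma Qf_single:
  assumes i: "i < m" and j: "j < n"
  shows "(h i j)^2 / (2 * d j) \<le> Qf h"
proof -
  have "(h i j)^2 / (2 * d j) \<le> (\<Sum>i<m. (h i j)^2) / (2 * d j)"
    using i d_pos[OF j] by (intro divide_right_mono member_le_sum) auto
  also have "\<dots> \<le> (\<Sum>j<n. (\<Sum>i<m. (h i j)^2) / (2 * d j))"
    using j d_pos by (intro member_le_sum[where f="\<lambda>j. (\<Sum>i<m. (h i j)^2) / (2 * d j)"] divide_nonneg_pos sum_nonneg) auto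
  also have "\<dots> \<le> Qf h" by (rule Qf_entry)
  finally show ?thesis .
qed

definition N1 :: "(nat\<Rightarrow>nat\<Rightarrow>real) \<Rightarrow> real" where "N1 h = (\<Sum>i<m. \<Sum>j<n. \<bar>h i j\<bar>)"
definition dist1 :: "(nat\<Rightarrow>nat\<Rightarrow>real) \<Rightarrow> (nat\<Rightarrow>nat\<Rightarrow>real) \<Rightarrow> real" where
  "dist1 a b = N1 (\<lambda>i j. a i j - b i j)"
definition Cs :: real where "Cs = (\<Sum>i<m. c i)"
definition Dinv :: real where "Dinv = (\<Sum>j<n. 1 / d j)"
definition Ab :: real where "Ab = 1 + 4 * Cs * Dinv"

lemma Cs_ge: "i < m \<Longrightarrow> c i \<le> Cs"
  unfolding Cs_def using c_pos by (intro member_le_sum) (auto intro: less_imp_le)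
lemma Cs_nonneg: "0 \<le> Cs"
  unfolding Cs_def using c_pos by (intro sum_nonneg) (auto intro: less_imp_le)
lemma Dinv_ge: "j < n \<Longrightarrow> 1 / d j \<le> Dinv"
  unfolding Dinv_def using d_pos by (intro member_le_sum) (auto intro: less_imp_le)
lemma Dinv_nonneg: "0 \<le> Dinv"
  unfolding Dinv_def using d_pos by (intro sum_nonneg) (auto intro: less_imp_le)

lemma cs_bounds: assumes x: "x \<in> profiles m n c" and j: "j < n"
  shows "0 \<le> cs x j" "cs x j \<le> Cs"
  unfolding cs_def Cs_def using entry_bounds[OF x _ j]
  by (auto intro!: sum_nonneg sum_mono)

lemma row_err:
  assumes i: "i < m" and x: "x \<in> profiles m n c" and v: "v \<in> profiles m n c"
    and s: "s \<in> profiles m n c"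
    and fv: "(\<Sum>j<n. gr v i j * (s i j - v i j)) \<le> 0"
  shows "(\<Sum>j<n. gr x i j * (s i j - x i j)) \<le> Ab * dist1 x v"
proof -
  define E where "E j = (\<Sum>k<m. \<bar>x k j - v k j\<bar>)" for j
  have T: "gr x i j * (s i j - x i j) - gr v i j * (s i j - v i j) \<le> Ab * E j" if j: "j < n" for j
  proof -
    have E0: "0 \<le> E j" unfolding E_def by (intro sum_nonneg) auto
    have g4: "\<bar>v i j - x i j\<bar> \<le> E j"
      unfolding E_def using i by (subst abs_minus_commute) (intro member_le_sum[where f="\<lambda>k. \<bar>x k j - v k j\<bar>"]; auto)
    have "\<bar>cs v j - cs x j\<bar> = \<bar>\<Sum>k<m. v k j - x k j\<bar>" by (simp add: cs_def sum_subtractf)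
    also have "\<dots> \<le> (\<Sum>k<m. \<bar>v k j - x k j\<bar>)" by (rule sum_abs)
    also have "\<dots> = E j" unfolding E_def by (simp add: abs_minus_commute)
    finally have c1: "\<bar>cs v j - cs x j\<bar> \<le> E j" .
    have dj: "0 < d j" using d_pos j by simp
    have "gr x i j - gr v i j = (cs v j - cs x j + (v i j - x i j)) * (1 / d j)"
      unfolding gr_def using dj by (simp add: field_simps)
    then have "\<bar>gr x i j - gr v i j\<bar> = \<bar>cs v j - cs x j + (v i j - x i j)\<bar> * (1 / d j)"
      using dj by (simp add: abs_mult)
    also have "\<dots> \<le> (2 * E j) * Dinv"
      using c1 g4 Dinv_ge[OF j] dj E0
      by (intro mult_mono) (auto intro: order_trans[OF abs_triangle_ineq])
    finally have g1: "\<bar>gr x i j - gr v i j\<bar> \<le> 2 * E j * Dinv" .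
    have g2: "\<bar>s i j - v i j\<bar> \<le> Cs"
      using entry_bounds[OF s i j] entry_bounds[OF v i j] Cs_ge[OF i] by linarith
    have xb: "0 \<le> cs x j + x i j" "cs x j + x i j \<le> 2 * Cs"
      using cs_bounds[OF x j] entry_bounds[OF x i j] Cs_ge[OF i] by linarith+
    have "\<bar>(cs x j + x i j) / d j\<bar> = (cs x j + x i j) * (1 / d j)" using xb dj by simp
    also have "\<dots> \<le> (2 * Cs) * Dinv" using xb Dinv_ge[OF j] dj by (intro mult_mono) auto
    finally have "\<bar>gr x i j\<bar> \<le> 1 + 2 * Cs * Dinv"
      unfolding gr_def by (auto intro: order_trans[OF abs_triangle_ineq4])
    then have g3: "\<bar>gr x i j\<bar> \<le> 1 + 2 * Cs * Dinv" .
    have "gr x i j * (s i j - x i j) - gr v i j * (s i j - v i j)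
        = (gr x i j - gr v i j) * (s i j - v i j) + gr x i j * (v i j - x i j)"
      by (simp add: algebra_simps)
    also have "\<dots> \<le> \<bar>gr x i j - gr v i j\<bar> * \<bar>s i j - v i j\<bar> + \<bar>gr x i j\<bar> * \<bar>v i j - x i j\<bar>"
      by (intro add_mono) (auto simp: abs_mult[symmetric])
    also have "\<dots> \<le> (2 * E j * Dinv) * Cs + (1 + 2 * Cs * Dinv) * E j"
      using g1 g2 g3 g4 by (intro add_mono mult_mono) auto
    also have "\<dots> = Ab * E j" unfolding Ab_def by (simp add: algebra_simps)
    finally show ?thesis .
  qed
  have "(\<Sum>j<n. gr x i j * (s i j - x i j)) - (\<Sum>j<n. gr v i j * (s i j - v i j)) \<le> (\<Sum>j<n. Ab * E j)"
    unfolding sum_subtractf[symmetric] using T by (intro sum_mono) auto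
  also have "(\<Sum>j<n. Ab * E j) = Ab * dist1 x v"
    unfolding dist1_def N1_def E_def sum_distrib_left[symmetric] by (subst sum.swap) simp
  finally show ?thesis using fv by simp
qed


lemma N1_nonneg: "0 \<le> N1 h" unfolding N1_def by (intro sum_nonneg) auto

lemma N1_row: "i < m \<Longrightarrow> N1 (rowv i f) = (\<Sum>j<n. \<bar>f j\<bar>)"
proof -
  assume i: "i < m"
  have "N1 (rowv i f) = (\<Sum>a<m. if a = i then (\<Sum>j<n. \<bar>f j\<bar>) else 0)"
    unfolding N1_def rowv_def by (rule sum.cong) auto
  also have "\<dots> = (\<Sum>j<n. \<bar>f j\<bar>)" using i by simp
  finally show ?thesis .
qed

lemma Qf_row: assumes i: "i < m" shows "(\<Sum>j<n. (f j)^2 / (2 * d j)) \<le> Qf (rowv i f)"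
proof -
  have "(\<Sum>a<m. (rowv i f a j)^2) = (f j)^2" for j
  proof -
    have "(\<Sum>a<m. (rowv i f a j)^2) = (\<Sum>a<m. if a = i then (f j)^2 else 0)"
      unfolding rowv_def by (rule sum.cong) auto
    then show ?thesis using i by simp
  qed
  then show ?thesis using Qf_entry[of "rowv i f"] by simp
qed

definition Dsum :: real where "Dsum = (\<Sum>j<n. d j)"

lemma Dsum_nonneg: "0 \<le> Dsum"
  unfolding Dsum_def using d_pos by (intro sum_nonneg) (auto intro: less_imp_le)

lemma N1_row_sq: assumes i: "i < m"
  shows "(N1 (rowv i f))^2 \<le> 2 * n * Dsum * Qf (rowv i f)"
proof -
  have "(N1 (rowv i f))^2 = (\<Sum>j<n. \<bar>f j\<bar>)^2" using N1_row[OF i] by simp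
  also have "\<dots> \<le> (\<Sum>j<n. (\<bar>f j\<bar>)^2) * n" using sum_squared_le_sum_of_squares[of "\<lambda>j. \<bar>f j\<bar>" "{..<n}"] by simp
  also have "(\<Sum>j<n. (\<bar>f j\<bar>)^2) \<le> (\<Sum>j<n. 2 * Dsum * ((f j)^2 / (2 * d j)))"
  proof (rule sum_mono)
    fix j assume j: "j \<in> {..<n}"
    have dj: "0 < d j" using d_pos j by simp
    have "d j \<le> Dsum" unfolding Dsum_def using j d_pos by (intro member_le_sum) (auto intro: less_imp_le)
    then have "(f j)^2 \<le> Dsum / d j * (f j)^2" using dj by (intro mult_le_cancel_right1[THEN iffD2] disjI1 conjI) (auto simp: field_simps)
    then show "(\<bar>f j\<bar>)^2 \<le> 2 * Dsum * ((f j)^2 / (2 * d j))" using dj by (simp add: field_simps)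
  qed
  also have "\<dots> = 2 * Dsum * (\<Sum>j<n. (f j)^2 / (2 * d j))" by (simp add: sum_distrib_left)
  finally have "(N1 (rowv i f))^2 \<le> 2 * Dsum * (\<Sum>j<n. (f j)^2 / (2 * d j)) * n"
    by (simp add: mult_right_mono)
  also have "\<dots> \<le> 2 * Dsum * Qf (rowv i f) * n"
    using Qf_row[OF i, of f] Dsum_nonneg
    by (intro mult_right_mono mult_left_mono) auto
  finally show ?thesis by (simp add: algebra_simps)
qed

lemma dist1_step: assumes "0 \<le> a" "a \<le> 1"
  shows "dist1 x (padd y (psc a h)) \<le> dist1 x y + N1 h"
proof -
  have "dist1 x (padd y (psc a h)) \<le> (\<Sum>i<m. \<Sum>j<n. \<bar>x i j - y i j\<bar> + \<bar>h i j\<bar>)"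
    unfolding dist1_def N1_def padd_def psc_def
  proof (intro sum_mono)
    fix i j
    have "\<bar>a * h i j\<bar> \<le> \<bar>h i j\<bar>" using assms by (simp add: abs_mult mult_left_le_one_le)
    then show "\<bar>x i j - (y i j + a * h i j)\<bar> \<le> \<bar>x i j - y i j\<bar> + \<bar>h i j\<bar>" by linarith
  qed
  then show ?thesis unfolding dist1_def N1_def by (simp add: sum.distrib)
qed

end

locale dyn = lg +
  fixes al :: real and sel :: "nat \<Rightarrow> (nat \<Rightarrow> nat \<Rightarrow> real) \<Rightarrow> nat \<Rightarrow> nat \<Rightarrow> real"
    and s1 sstar :: "nat \<Rightarrow> nat \<Rightarrow> real" and \<omega> :: "nat \<Rightarrow> nat"
  assumes al: "0 < al" "al \<le> 1"
    and s1: "s1 \<in> profiles m n c"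
    and sel: "\<And>t s i. s \<in> profiles m n c \<Longrightarrow> i < m \<Longrightarrow>
                 sel t s i \<in> best_responses m n c d rmax rmin i s"
    and NE: "is_pure_NE m n c d rmax rmin sstar"
    and om: "\<And>t. \<omega> t < m"
begin

abbreviation X where "X t \<equiv> br_dynamics al sel s1 \<omega> t"
definition H where "H t = rowv (\<omega> t) (\<lambda>j. sel t (X t) (\<omega> t) j - X t (\<omega> t) j)"

lemma X_Suc: "X (Suc t) = padd (X t) (psc al (H t))"
  by (rule ext)+ (simp add: H_def Let_def padd_def psc_def rowv_def)

lemma X_prof: "X t \<in> profiles m n c"
proof (induction t)
  case 0 then show ?case using s1 by simp
next
  case (Suc t)
  let ?i = "\<omega> t"
  have w: "sel t (X t) ?i \<in> strat_set n c ?i"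
    using br_foc(1)[OF om sel[OF Suc om]] .
  have xi: "X t ?i \<in> strat_set n c ?i" using Suc om by (simp add: profiles_def)
  have new: "(\<lambda>j. X t ?i j + al * (sel t (X t) ?i j - X t ?i j)) \<in> strat_set n c ?i"
    using strat_convex[OF w xi] al by simp
  show ?case using Suc new om[of t] by (auto simp: profiles_def Let_def)
qed

lemma inc: "pot (X t) + al * Qf (H t) \<le> pot (X (Suc t))"
  unfolding X_Suc H_def
  using improve[OF om sel[OF X_prof om]] X_prof om al by (simp add: profiles_def)

lemma pot_mono: "incseq (\<lambda>t. pot (X t))"
proof (rule incseq_SucI)
  fix t show "pot (X t) \<le> pot (X (Suc t))"
    using inc[of t] Qf_nonneg[of "H t"] al by (smt (verit) mult_nonneg_nonneg)
qed

lemma pot_le: "pot (X t) \<le> pot sstar"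
  using pot_le_star[OF NE X_prof] Qf_nonneg by (smt (verit))

definition K1 :: real where "K1 = 2 * n * Dsum / al"

lemma K1_nonneg: "0 \<le> K1"
  unfolding K1_def Dsum_def using al d_pos by (intro divide_nonneg_pos mult_nonneg_nonneg sum_nonneg) (auto intro: less_imp_le)

lemma H_sq: "(N1 (H t))^2 \<le> K1 * (pot (X (Suc t)) - pot (X t))"
proof -
  have "(N1 (H t))^2 \<le> 2 * n * Dsum * Qf (H t)" unfolding H_def by (rule N1_row_sq[OF om])
  also have "Qf (H t) \<le> (pot (X (Suc t)) - pot (X t)) / al" using inc[of t] al by (simp add: field_simps)
  then have "2 * n * Dsum * Qf (H t) \<le> 2 * n * Dsum * ((pot (X (Suc t)) - pot (X t)) / al)"
    using Dsum_nonneg by (intro mult_left_mono) auto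
  finally show ?thesis unfolding K1_def by simp
qed

lemma dist_k: "dist1 (X t) (X (t + k)) \<le> (\<Sum>l<k. N1 (H (t + l)))"
proof (induction k)
  case 0 then show ?case by (simp add: dist1_def N1_def)
next
  case (Suc k)
  have "dist1 (X t) (X (t + Suc k)) \<le> dist1 (X t) (X (t + k)) + N1 (H (t + k))"
    using dist1_step[of al "X t" "X (t + k)" "H (t + k)"] al X_Suc[of "t + k"] by simp
  then show ?case using Suc by simp
qed


lemma Ab_nonneg: "0 \<le> Ab" unfolding Ab_def using Cs_nonneg Dinv_nonneg by simp

lemma upd_prof: "x \<in> profiles m n c \<Longrightarrow> i < m \<Longrightarrow> w \<in> strat_set n c i \<Longrightarrow> x(i := w) \<in> profiles m n c"
  by (auto simp: profiles_def)

lemma sstar_prof: "sstar \<in> profiles m n c" using NE by (simp add: is_pure_NE_def)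

lemma block:
  assumes good: "\<And>l. l < m \<Longrightarrow> \<omega> (t + l) = l"
  shows "pot sstar - pot (X t) \<le> m * Ab * (\<Sum>l<m. N1 (H (t + l)))"
proof -
  define x where "x = X t"
  define S where "S = (\<Sum>l<m. N1 (H (t + l)))"
  define D where "D = (\<lambda>i j. sstar i j - x i j)"
  have "sstar = padd x D" unfolding D_def padd_def by simp
  then have "pot sstar = pot x + ip (gr x) D - Qf D" using taylor by simp
  then have e1: "pot sstar - pot x \<le> ip (gr x) D" using Qf_nonneg[of D] by simp
  have rowb: "(\<Sum>j<n. gr x i j * D i j) \<le> Ab * S" if i: "i < m" for i
  proof -
    define u where "u = X (t + i)"
    define w where "w = sel (t + i) u i"
    have ui: "\<omega> (t + i) = i" using good i by simp
    have wbr: "w \<in> best_responses m n c d rmax rmin i u"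
      unfolding w_def u_def using sel[OF X_prof i] .
    have ws: "w \<in> strat_set n c i" using br_foc(1)[OF i wbr] .
    have vprof: "u(i := w) \<in> profiles m n c" using upd_prof[OF _ i ws] X_prof unfolding u_def by simp
    have fv0: "(\<Sum>j<n. gr (u(i := w)) i j * (sstar i j - w j)) \<le> 0"
      using br_foc(2)[OF i wbr] sstar_prof i by (simp add: profiles_def)
    have fv: "(\<Sum>j<n. gr (u(i := w)) i j * (sstar i j - (u(i := w)) i j)) \<le> 0"
      using fv0 by simp
    have r: "(\<Sum>j<n. gr x i j * (sstar i j - x i j)) \<le> Ab * dist1 x (u(i := w))"
      using row_err[OF i X_prof[of t] vprof sstar_prof fv] unfolding x_def .
    have veq: "u(i := w) = padd u (psc 1 (H (t + i)))"
      unfolding H_def ui upd_eq u_def w_def by (simp add: psc_def)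
    have "dist1 x (u(i := w)) \<le> dist1 x u + N1 (H (t + i))"
      unfolding veq using dist1_step[of 1] by simp
    also have "\<dots> \<le> (\<Sum>l<i. N1 (H (t + l))) + N1 (H (t + i))"
      using dist_k[of t i] unfolding x_def u_def by simp
    also have "\<dots> = (\<Sum>l<Suc i. N1 (H (t + l)))" by simp
    also have "\<dots> \<le> S" unfolding S_def using i
      by (intro sum_mono2) (auto simp: N1_nonneg)
    finally have "dist1 x (u(i := w)) \<le> S" .
    then have "Ab * dist1 x (u(i := w)) \<le> Ab * S" using Ab_nonneg by (rule mult_left_mono)
    then show ?thesis using r unfolding D_def by simp
  qed
  have "ip (gr x) D \<le> (\<Sum>i<m. Ab * S)" unfolding ip_def using rowb by (intro sum_mono) auto
  then show ?thesis using e1 unfolding x_def S_def by simp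
qed

definition KK :: real where "KK = (m * Ab)^2 * m * K1"

lemma KK_nonneg: "0 \<le> KK" unfolding KK_def using K1_nonneg by simp

lemma block_sq:
  assumes good: "\<And>l. l < m \<Longrightarrow> \<omega> (t + l) = l"
  shows "(pot sstar - pot (X t))^2 \<le> KK * (pot (X (t + m)) - pot (X t))"
proof -
  define S where "S = (\<Sum>l<m. N1 (H (t + l)))"
  have e0: "0 \<le> pot sstar - pot (X t)" using pot_le by simp
  have "(pot sstar - pot (X t))^2 \<le> (m * Ab * S)^2"
    using block[OF good] e0 unfolding S_def by (intro power_mono) auto
  also have "\<dots> = (m * Ab)^2 * S^2" by (simp add: power_mult_distrib)
  also have "S^2 \<le> (\<Sum>l<m. (N1 (H (t + l)))^2) * m"
    unfolding S_def using sum_squared_le_sum_of_squares[of "\<lambda>l. N1 (H (t + l))" "{..<m}"] by simp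
  also have "(\<Sum>l<m. (N1 (H (t + l)))^2) \<le> (\<Sum>l<m. K1 * (pot (X (t + Suc l)) - pot (X (t + l))))"
    using H_sq by (intro sum_mono) simp
  also have "\<dots> = K1 * (pot (X (t + m)) - pot (X t))"
    unfolding sum_distrib_left[symmetric]
    using sum_lessThan_telescope[of "\<lambda>l. pot (X (t + l))" m] by simp
  finally show ?thesis unfolding KK_def
    by (simp add: mult_left_mono mult_right_mono algebra_simps)
qed


lemma gap_small:
  assumes good: "\<And>T. \<exists>t\<ge>T. \<forall>l<m. \<omega> (t + l) = l"
    and e: "0 < e"
  shows "\<exists>T. \<forall>t\<ge>T. pot sstar - pot (X t) < e"
proof -
  obtain L where "(\<lambda>t. pot (X t)) \<longlonglongrightarrow> L"
    using incseq_convergent[OF pot_mono, of "pot sstar"] pot_le by blast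
  then have cy: "Cauchy (\<lambda>t. pot (X t))" by (rule LIMSEQ_imp_Cauchy)
  define dl where "dl = e^2 / (KK + 1)"
  have dl: "0 < dl" unfolding dl_def using e KK_nonneg by simp
  obtain M where M: "\<And>a b. a \<ge> M \<Longrightarrow> b \<ge> M \<Longrightarrow> norm (pot (X a) - pot (X b)) < dl"
    using CauchyD[OF cy dl] by blast
  obtain t where t: "t \<ge> M" "\<And>l. l < m \<Longrightarrow> \<omega> (t + l) = l" using good[of M] by blast
  have "pot (X (t + m)) - pot (X t) < dl" using M[of "t + m" t] t by simp
  then have "KK * (pot (X (t + m)) - pot (X t)) \<le> KK * dl"
    using KK_nonneg by (intro mult_left_mono) auto
  also have "KK * dl < e^2" unfolding dl_def using e KK_nonneg by (simp add: field_simps)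
  finally have "(pot sstar - pot (X t))^2 < e^2" using block_sq[OF t(2)] by simp
  then have et: "pot sstar - pot (X t) < e"
    using e pot_le[of t] by (smt (verit) power_mono)
  have "\<forall>t'\<ge>t. pot sstar - pot (X t') < e"
    using et pot_mono by (auto simp: incseq_def) (smt (verit))
  then show ?thesis by blast
qed

lemma converges:
  assumes good: "\<And>T. \<exists>t\<ge>T. \<forall>l<m. \<omega> (t + l) = l"
    and i: "i < m" and j: "j < n"
  shows "(\<lambda>t. X t i j) \<longlonglongrightarrow> sstar i j"
  unfolding LIMSEQ_iff
proof (intro allI impI)
  fix r :: real assume r: "0 < r"
  have dj: "0 < d j" using d_pos j by simp
  obtain T where T: "\<And>t. t \<ge> T \<Longrightarrow> pot sstar - pot (X t) < r^2 / (2 * d j)"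
    using gap_small[OF good, of "r^2 / (2 * d j)"] r dj by auto
  have "norm (X t i j - sstar i j) < r" if t: "t \<ge> T" for t
  proof -
    have "(X t i j - sstar i j)^2 / (2 * d j) \<le> Qf (\<lambda>i j. X t i j - sstar i j)"
      using Qf_single[OF i j, of "\<lambda>i j. X t i j - sstar i j"] by simp
    also have "\<dots> \<le> pot sstar - pot (X t)" using pot_le_star[OF NE X_prof[of t]] by simp
    also have "\<dots> < r^2 / (2 * d j)" using T[OF t] .
    finally have "(X t i j - sstar i j)^2 < r^2" using dj by (simp add: divide_strict_right_mono_neg field_simps)
    then have a: "\<bar>X t i j - sstar i j\<bar>^2 < r^2" by simp
    show ?thesis using power_less_imp_less_base[OF a less_imp_le[OF r]] by simp
  qed
  then show "\<exists>no. \<forall>t\<ge>no. norm (X t i j - sstar i j) < r" by blast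
qed

end


lemma blocks_AE:
  fixes \<pi> :: "nat \<Rightarrow> nat pmf" and m :: nat and pmin :: real
  assumes m: "0 < m" and pmin: "0 < pmin" "\<And>t i. i < m \<Longrightarrow> pmin \<le> pmf (\<pi> t) i"
  shows "AE \<omega> in PiM UNIV (\<lambda>t. measure_pmf (\<pi> t)). \<forall>T. \<exists>t\<ge>T. \<forall>l<m. \<omega> (t + l) = l"
proof -
  interpret PS: product_prob_space "\<lambda>t. measure_pmf (\<pi> t)" UNIV
    by unfold_locales
  let ?P = "PiM UNIV (\<lambda>t. measure_pmf (\<pi> t))"
  have cyl: "measure ?P {\<omega> \<in> space ?P. \<forall>idx\<in>J. \<omega> idx \<in> {idx mod m}} = (\<Prod>idx\<in>J. pmf (\<pi> idx) (idx mod m))"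
    if J: "finite J" for J
  proof -
    have "emeasure ?P {\<omega> \<in> space ?P. \<forall>idx\<in>J. \<omega> idx \<in> {idx mod m}} = (\<Prod>idx\<in>J. emeasure (measure_pmf (\<pi> idx)) {idx mod m})"
      using J by (intro PS.emeasure_PiM_Collect) auto
    also have "\<dots> = ennreal (\<Prod>idx\<in>J. pmf (\<pi> idx) (idx mod m))"
      by (simp add: emeasure_pmf_single prod_ennreal)
    finally show ?thesis
      by (simp add: PS.emeasure_eq_measure prod_nonneg)
  qed
  define B where "B k = {k * m ..< k * m + m}" for k
  define F where "F k = {\<omega> \<in> space ?P. \<forall>idx\<in>B k. \<omega> idx \<in> {idx mod m}}" for k
  have Fs: "F k \<in> sets ?P" for k
  proof -
    have "F k = prod_emb UNIV (\<lambda>t. measure_pmf (\<pi> t)) (B k) (\<Pi>\<^sub>E idx\<in>B k. {idx mod m})"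
      unfolding F_def prod_emb_def by (auto simp: PiE_iff space_PiM)
    also have "\<dots> \<in> sets ?P" by (rule sets_PiM_I) (auto simp: B_def)
    finally show ?thesis .
  qed
  have divB: "idx div m = k" if "idx \<in> B k" for idx k
    using that unfolding B_def by (intro div_nat_eqI) (auto simp: algebra_simps)
  have disj: "B k \<inter> B k' = {}" if "k \<noteq> k'" for k k'
    using divB that by blast
  have pF: "measure ?P (F k) = (\<Prod>idx\<in>B k. pmf (\<pi> idx) (idx mod m))" for k
    unfolding F_def by (rule cyl) (simp add: B_def)
  have indep: "PS.indep_events F UNIV"
  proof (rule PS.indep_eventsI)
    fix K :: "nat set" assume K: "finite K" "K \<noteq> {}"
    have "(\<Inter>k\<in>K. F k) = {\<omega> \<in> space ?P. \<forall>idx\<in>(\<Union>k\<in>K. B k). \<omega> idx \<in> {idx mod m}}"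
      using K(2) unfolding F_def by auto
    moreover have fin: "finite (\<Union>k\<in>K. B k)" using K(1) by (auto simp: B_def)
    ultimately have "measure ?P (\<Inter>k\<in>K. F k) = (\<Prod>idx\<in>(\<Union>k\<in>K. B k). pmf (\<pi> idx) (idx mod m))"
      using cyl[OF fin] by simp
    also have "\<dots> = (\<Prod>k\<in>K. \<Prod>idx\<in>B k. pmf (\<pi> idx) (idx mod m))"
      using K(1) disj by (intro prod.UNION_disjoint) (auto simp: B_def)
    finally show "measure ?P (\<Inter>k\<in>K. F k) = (\<Prod>k\<in>K. measure ?P (F k))"
      using pF by simp
  qed (use Fs in auto)
  have lb: "pmin ^ m \<le> measure ?P (F k)" for k
  proof -
    have "(\<Prod>idx\<in>B k. pmin) \<le> (\<Prod>idx\<in>B k. pmf (\<pi> idx) (idx mod m))"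
      using pmin m by (intro prod_mono) auto
    then show ?thesis using pF by (simp add: B_def)
  qed
  let ?U = "\<lambda>n. \<Union>k\<in>{n..}. F k"
  have Us: "?U n \<in> sets ?P" for n using Fs by auto
  have "(\<lambda>n. measure ?P (?U n)) \<longlonglongrightarrow> measure ?P (\<Inter>n. ?U n)"
    using Us by (intro PS.finite_Lim_measure_decseq decseq_SucI) (auto intro: Suc_leD)
  moreover have "pmin ^ m \<le> measure ?P (?U n)" for n
  proof -
    have "F n \<subseteq> ?U n" by auto
    then have "measure ?P (F n) \<le> measure ?P (?U n)" by (rule PS.finite_measure_mono[OF _ Us])
    then show ?thesis using lb[of n] by linarith
  qed
  ultimately have "pmin ^ m \<le> measure ?P (\<Inter>n. ?U n)"
    by (intro LIMSEQ_le_const) auto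
  moreover have "0 < pmin ^ m" using pmin by simp
  ultimately have "measure ?P (\<Inter>n. ?U n) \<noteq> 0" by linarith
  then have "measure ?P (\<Inter>n. ?U n) = 1" using PS.borel_0_1_law[OF indep] by blast
  then have ae: "AE \<omega> in ?P. \<omega> \<in> (\<Inter>n. ?U n)" by (rule PS.AE_prob_1)
  have key: "\<forall>T. \<exists>t\<ge>T. \<forall>l<m. \<omega> (t + l) = l" if w: "\<omega> \<in> (\<Inter>n. ?U n)" for \<omega>
  proof
    fix T
    obtain k where k: "k \<ge> T" "\<omega> \<in> F k" using w by blast
    have "k \<le> k * m" using m by simp
    then have "T \<le> k * m" using k(1) by linarith
    moreover have "\<forall>l<m. \<omega> (k * m + l) = l" using k(2) unfolding F_def B_def by auto
    ultimately show "\<exists>t\<ge>T. \<forall>l<m. \<omega> (t + l) = l" by blast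
  qed
  show ?thesis using eventually_mono[OF ae key] .
qed


theorem theorem4p4:
  fixes m n :: nat and c d :: "nat \<Rightarrow> real" and rmax rmin \<alpha> pmin :: real
    and \<pi> :: "nat \<Rightarrow> nat pmf"
    and sel :: "nat \<Rightarrow> (nat \<Rightarrow> nat \<Rightarrow> real) \<Rightarrow> nat \<Rightarrow> nat \<Rightarrow> real"
    and s1 sstar :: "nat \<Rightarrow> nat \<Rightarrow> real"
  assumes G: "lending_game m n c d rmax rmin"
    and alpha: "0 < \<alpha>" "\<alpha> \<le> 1"
    and s1: "s1 \<in> profiles m n c"
    and pi_support: "\<And>t. set_pmf (\<pi> t) \<subseteq> {..<m}"
    and pmin: "0 < pmin" "\<And>t i. i < m \<Longrightarrow> pmin \<le> pmf (\<pi> t) i"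
    and sel: "\<And>t s i. s \<in> profiles m n c \<Longrightarrow> i < m \<Longrightarrow>
                 sel t s i \<in> best_responses m n c d rmax rmin i s"
    and NE: "is_pure_NE m n c d rmax rmin sstar"
  shows "AE \<omega> in (PiM UNIV (\<lambda>t. measure_pmf (\<pi> t))).
           (\<forall>i<m. \<forall>j<n. (\<lambda>t. br_dynamics \<alpha> sel s1 \<omega> t i j) \<longlonglongrightarrow> sstar i j)"
  proof -
  interpret lg m n c d rmax rmin by unfold_locales (rule G)
  let ?P = "PiM UNIV (\<lambda>t. measure_pmf (\<pi> t))"
  have A1: "AE \<omega> in ?P. \<forall>t. \<omega> t < m"
  proof (subst AE_all_countable, intro allI)
    fix t
    have "AE x in measure_pmf (\<pi> t). x < m"
      using pi_support[of t] by (auto simp: AE_measure_pmf_iff)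
    then show "AE \<omega> in ?P. \<omega> t < m"
      by (intro AE_PiM_component) (auto simp: prob_space_measure_pmf)
  qed
  have A2: "AE \<omega> in ?P. \<forall>T. \<exists>t\<ge>T. \<forall>l<m. \<omega> (t + l) = l"
    by (rule blocks_AE[OF m_pos pmin])
  have key: "\<forall>i<m. \<forall>j<n. (\<lambda>t. br_dynamics \<alpha> sel s1 \<omega> t i j) \<longlonglongrightarrow> sstar i j"
    if w: "(\<forall>t. \<omega> t < m) \<and> (\<forall>T. \<exists>t\<ge>T. \<forall>l<m. \<omega> (t + l) = l)" for \<omega>
  proof (intro allI impI)
    fix i j assume ij: "i < m" "j < n"
    have D: "dyn m n c d rmax rmin \<alpha> sel s1 sstar \<omega>"
      by (intro dyn.intro dyn_axioms.intro) (use G alpha s1 sel NE w in \<open>auto simp: lg_def\<close>)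
    show "(\<lambda>t. br_dynamics \<alpha> sel s1 \<omega> t i j) \<longlonglongrightarrow> sstar i j"
      using dyn.converges[OF D _ ij] w by blast
  qed
  show ?thesis using eventually_mono[OF eventually_conj[OF A1 A2] key] .
qed

end
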